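(* Let $K$ be a skew field, $V$ a left (topological) $K$-vector space with basis $v^0,v^1,\ldots$, $V'$ the dual right $K$-vector space with basis $p_0,p_1,\ldots$, with pairing $(\cdot,\cdot)$, and assume $D=(y_i^k)$, $y_i^k=(v^k,p_i)$, is generic. For $\mathbf f\in V$, $\mathbf g\in V'$ put $f_i=(\mathbf f,p_i)$, $g^k=(v^k,\mathbf g)$ and, for $n\ge0$, $$R_n(\mathbf f,\mathbf g)=(\mathbf f,\mathbf g)-\sum_{i,k=0}^n f_i(z_k^i)_n g^k .$$ Then $$(\mathbf f,\mathbf g)=\sum_{m=0}^n\Delta_R^m f\;|D_m|_m^m\;\Delta_L^m g+R_n(\mathbf f,\mathbf g),$$ and $R_n(\mathbf f,p_i)=R_n(v^k,\mathbf g)=0$ for all $\mathbf f\in V$, $\mathbf g\in V'$ and $0\le i,k\le n$.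
   Context: The pairing $(\cdot,\cdot):V\times V'\to K$ is biadditive with $(\lambda v,p\mu)=\lambda(v,p)\mu$. $D_m$ is the $(m+1)\times(m+1)$ matrix with entry $y_i^k$ in row $k$, column $i$ ($0\le i,k\le m$), and $(z_k^i)_n$ is the entry in row $i$, column $k$ of $D_n^{-1}$. Quasideterminants: for a square matrix $M$ with rows/columns indexed by $\{0,\ldots,n\}$ and entry $M_a^b$ in row $b$, column $a$, $|M|_a^b=M_a^b-r\,(M^{(b,a)})^{-1}c$, where $M^{(b,a)}$ deletes row $b$ and column $a$, $r$ is row $b$ without its column-$a$ entry and $c$ is column $a$ without its row-$b$ entry ($|M|_0^0=M_0^0$ for $1\times1$ matrices). Difference derivatives: let $A=(a_m^i)$ (upper triangular, $a_m^i=0$ for $i>m$) and $C=(c_k^m)$ (lower triangular, $c_k^m=0$ for $k>m$) be the unique matrices such that $q_m=\sum_{i=0}^m p_ia_m^i$ and $w^m=\sum_{k=0}^m c_k^m v^k$ satisfy $(w^m,q_{m'})=0$ for $m\ne m'$ and $(w^m,p_m)=(v^m,q_m)=1$. Then $\Delta_R^m f=(\mathbf f,q_m)=\sum_{i=0}^m f_ia_m^i$ and $\Delta_L^m g=(w^m,\mathbf g)=\sum_{k=0}^m c_k^m g^k$. Genericity means all $D_m$ and all quasideterminants appearing are invertible. *)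

theory Defs
  imports Main
begin

(* Matrices are functions M :: nat => nat => 'k, with M r c the entry in row r, column c. *)

(* N (rows indexed by Cs, columns by Rs) is the two-sided inverse of M (rows Rs, columns Cs);
   N is normalised to be 0 outside Cs x Rs so that it is unique. *)
definition is_inv_on :: "nat set \<Rightarrow> nat set \<Rightarrow> (nat \<Rightarrow> nat \<Rightarrow> 'k::ring_1) \<Rightarrow> (nat \<Rightarrow> nat \<Rightarrow> 'k) \<Rightarrow> bool" where
  "is_inv_on Rs Cs M N \<longleftrightarrow>
     (\<forall>r\<in>Rs. \<forall>r'\<in>Rs. (\<Sum>c\<in>Cs. M r c * N c r') = (if r = r' then 1 else 0)) \<and>
     (\<forall>c\<in>Cs. \<forall>c'\<in>Cs. (\<Sum>r\<in>Rs. N c r * M r c') = (if c = c' then 1 else 0)) \<and>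
     (\<forall>c r. c \<notin> Cs \<or> r \<notin> Rs \<longrightarrow> N c r = 0)"

definition invertible_on :: "nat set \<Rightarrow> nat set \<Rightarrow> (nat \<Rightarrow> nat \<Rightarrow> 'k::ring_1) \<Rightarrow> bool" where
  "invertible_on Rs Cs M \<longleftrightarrow> (\<exists>N. is_inv_on Rs Cs M N)"

definition inv_on :: "nat set \<Rightarrow> nat set \<Rightarrow> (nat \<Rightarrow> nat \<Rightarrow> 'k::ring_1) \<Rightarrow> (nat \<Rightarrow> nat \<Rightarrow> 'k)" where
  "inv_on Rs Cs M = (THE N. is_inv_on Rs Cs M N)"

(* Quasideterminant |M|_a^b of the (n+1)x(n+1) matrix M (indices 0..n), b = row, a = column:
   M_a^b - r (M^{(b,a)})^{-1} c. *)
definition quasidet :: "nat \<Rightarrow> (nat \<Rightarrow> nat \<Rightarrow> 'k::ring_1) \<Rightarrow> nat \<Rightarrow> nat \<Rightarrow> 'k" where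
  "quasidet n M a b =
     M b a - (\<Sum>a'\<in>{0..n}-{a}. \<Sum>b'\<in>{0..n}-{b}.
                 M b a' * inv_on ({0..n}-{b}) ({0..n}-{a}) M a' b' * M b' a)"

(* D_m : entry y_i^k (= y i k) in row k, column i, 0 <= i,k <= m *)
definition Dmat :: "(nat \<Rightarrow> nat \<Rightarrow> 'k::ring_1) \<Rightarrow> nat \<Rightarrow> nat \<Rightarrow> nat \<Rightarrow> 'k" where
  "Dmat y m = (\<lambda>r c. if r \<le> m \<and> c \<le> m then y c r else 0)"

(* (z_k^i)_n = entry in row i, column k of D_n^{-1} *)
definition zcoef :: "(nat \<Rightarrow> nat \<Rightarrow> 'k::ring_1) \<Rightarrow> nat \<Rightarrow> nat \<Rightarrow> nat \<Rightarrow> 'k" where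
  "zcoef y n i k = inv_on {0..n} {0..n} (Dmat y n) i k"

definition generic :: "(nat \<Rightarrow> nat \<Rightarrow> 'k::division_ring) \<Rightarrow> bool" where
  "generic y \<longleftrightarrow> (\<forall>m. invertible_on {0..m} {0..m} (Dmat y m) \<and> quasidet m (Dmat y m) m m \<noteq> 0)"

definition left_module :: "('k::ring_1 \<Rightarrow> 'v::ab_group_add \<Rightarrow> 'v) \<Rightarrow> bool" where
  "left_module sm \<longleftrightarrow>
     (\<forall>a x y. sm a (x + y) = sm a x + sm a y) \<and> (\<forall>a b x. sm (a + b) x = sm a x + sm b x) \<and>
     (\<forall>a b x. sm (a * b) x = sm a (sm b x)) \<and> (\<forall>x. sm 1 x = x)"

definition right_module :: "('w::ab_group_add \<Rightarrow> 'k::ring_1 \<Rightarrow> 'w) \<Rightarrow> bool" where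
  "right_module sm \<longleftrightarrow>
     (\<forall>a x y. sm (x + y) a = sm x a + sm y a) \<and> (\<forall>a b x. sm x (a + b) = sm x a + sm x b) \<and>
     (\<forall>a b x. sm x (a * b) = sm (sm x a) b) \<and> (\<forall>x. sm x 1 = x)"

definition pairing :: "('k::ring_1 \<Rightarrow> 'v::ab_group_add \<Rightarrow> 'v) \<Rightarrow> ('w::ab_group_add \<Rightarrow> 'k \<Rightarrow> 'w) \<Rightarrow> ('v \<Rightarrow> 'w \<Rightarrow> 'k) \<Rightarrow> bool" where
  "pairing smL smR pr \<longleftrightarrow>
     (\<forall>x x' g. pr (x + x') g = pr x g + pr x' g) \<and> (\<forall>x g g'. pr x (g + g') = pr x g + pr x g') \<and>
     (\<forall>l x g m. pr (smL l x) (smR g m) = l * pr x g * m)"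

definition qvec :: "('w::ab_group_add \<Rightarrow> 'k \<Rightarrow> 'w) \<Rightarrow> (nat \<Rightarrow> 'w) \<Rightarrow> (nat \<Rightarrow> nat \<Rightarrow> 'k) \<Rightarrow> nat \<Rightarrow> 'w" where
  "qvec smR p a m = (\<Sum>i\<le>m. smR (p i) (a i m))"

definition wvec :: "('k \<Rightarrow> 'v::ab_group_add \<Rightarrow> 'v) \<Rightarrow> (nat \<Rightarrow> 'v) \<Rightarrow> (nat \<Rightarrow> nat \<Rightarrow> 'k) \<Rightarrow> nat \<Rightarrow> 'v" where
  "wvec smL v c m = (\<Sum>k\<le>m. smL (c k m) (v k))"

definition DeltaR :: "('v \<Rightarrow> 'w \<Rightarrow> 'k::ring_1) \<Rightarrow> (nat \<Rightarrow> 'w) \<Rightarrow> (nat \<Rightarrow> nat \<Rightarrow> 'k) \<Rightarrow> nat \<Rightarrow> 'v \<Rightarrow> 'k" where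
  "DeltaR pr p a m f = (\<Sum>i\<le>m. pr f (p i) * a i m)"

definition DeltaL :: "('v \<Rightarrow> 'w \<Rightarrow> 'k::ring_1) \<Rightarrow> (nat \<Rightarrow> 'v) \<Rightarrow> (nat \<Rightarrow> nat \<Rightarrow> 'k) \<Rightarrow> nat \<Rightarrow> 'w \<Rightarrow> 'k" where
  "DeltaL pr v c m g = (\<Sum>k\<le>m. c k m * pr (v k) g)"

definition remainder :: "('v \<Rightarrow> 'w \<Rightarrow> 'k::ring_1) \<Rightarrow> (nat \<Rightarrow> 'v) \<Rightarrow> (nat \<Rightarrow> 'w) \<Rightarrow> nat \<Rightarrow> 'v \<Rightarrow> 'w \<Rightarrow> 'k" where
  "remainder pr v p n f g =
     pr f g - (\<Sum>i\<le>n. \<Sum>k\<le>n. pr f (p i) * zcoef (\<lambda>i k. pr (v k) (p i)) n i k * pr (v k) g)"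

end

theory Submission
  imports Defs
begin

lemma delta_l: "(if i = j then 1 else 0) * x = (if i = j then x else (0::'a::ring_1))" by simp
lemma delta_r: "x * (if i = j then 1 else 0) = (if i = j then x else (0::'a::ring_1))" by simp
lemma delta_m: "(if P then x else 0) * z = (if P then x * z else (0::'a::ring_1))" by simp

lemma is_inv_unique:
  assumes "finite Rs" "finite Cs" "is_inv_on Rs Cs M N" "is_inv_on Rs Cs M N'"
  shows "N = N'"
proof (intro ext)
  fix c r
  show "N c r = N' c r"
  proof (cases "c \<in> Cs \<and> r \<in> Rs")
    case True
    then have c: "c\<in>Cs" and r: "r\<in>Rs" by auto
    have "N c r = (\<Sum>r'\<in>Rs. N c r' * (if r' = r then 1 else 0))"
      using r assms(1) by (simp add: delta_l delta_r delta_m sum.delta sum.delta')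
    also have "\<dots> = (\<Sum>r'\<in>Rs. N c r' * (\<Sum>c'\<in>Cs. M r' c' * N' c' r))"
      using assms(4) r unfolding is_inv_on_def by (intro sum.cong) auto
    also have "\<dots> = (\<Sum>c'\<in>Cs. (\<Sum>r'\<in>Rs. N c r' * M r' c') * N' c' r)"
      by (simp add: sum_distrib_left sum_distrib_right mult.assoc) (rule sum.swap)
    also have "\<dots> = (\<Sum>c'\<in>Cs. (if c = c' then 1 else 0) * N' c' r)"
      using assms(3) c unfolding is_inv_on_def by (intro sum.cong) auto
    also have "\<dots> = (\<Sum>c'\<in>Cs. if c = c' then N' c' r else 0)"
      by (intro sum.cong) auto
    also have "\<dots> = N' c r" using c assms(2) by simp
    finally show ?thesis .
  next
    case False then show ?thesis using assms(3,4) unfolding is_inv_on_def by auto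
  qed
qed

lemma inv_on_is:
  assumes "finite Rs" "finite Cs" "is_inv_on Rs Cs M N"
  shows "is_inv_on Rs Cs M (inv_on Rs Cs M)"
  unfolding inv_on_def
  by (rule theI[of _ N]) (use assms is_inv_unique in blast)+

lemma is_inv_cong:
  assumes "\<And>r c. r \<in> Rs \<Longrightarrow> c \<in> Cs \<Longrightarrow> M r c = M' r c"
  shows "is_inv_on Rs Cs M N = is_inv_on Rs Cs M' N"
  unfolding is_inv_on_def using assms by (simp cong: sum.cong)

lemma one_sided_div:
  fixes x y :: "'k::division_ring"
  assumes "x * y = 1" shows "y * x = 1"
proof -
  have "x \<noteq> 0" using assms by auto
  then have "y = inverse x * (x * y)" by (simp add: mult.assoc[symmetric])
  then have "y = inverse x" using assms by simp
  then show ?thesis using \<open>x \<noteq> 0\<close> by simp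
qed

lemma split_last: "(\<Sum>k\<le>(m::nat). f k) = (\<Sum>k<m. f k) + (f m :: 'a::comm_monoid_add)"
proof -
  have "{..m} = insert m {..<m}" by auto
  then show ?thesis by (simp add: add.commute)
qed

context
  fixes y :: "nat \<Rightarrow> nat \<Rightarrow> 'k::division_ring"
  assumes gen: "generic y"
begin

lemma Zinv: "is_inv_on {0..m} {0..m} (Dmat y m) (zcoef y m)"
  using gen unfolding generic_def invertible_on_def zcoef_def
  by (metis finite_atLeastAtMost inv_on_is)

lemma ZL: assumes "i \<le> m" "j \<le> m" shows "(\<Sum>k\<le>m. zcoef y m i k * y j k) = (if i = j then 1 else 0)"
proof -
  have "(\<Sum>k\<le>m. zcoef y m i k * Dmat y m k j) = (if i = j then 1 else 0)"
    using Zinv[of m] assms unfolding is_inv_on_def by (auto simp: atLeast0AtMost)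
  moreover have "(\<Sum>k\<le>m. zcoef y m i k * Dmat y m k j) = (\<Sum>k\<le>m. zcoef y m i k * y j k)"
    using assms by (intro sum.cong) (auto simp: Dmat_def)
  ultimately show ?thesis by simp
qed

lemma ZR: assumes "k \<le> m" "k' \<le> m" shows "(\<Sum>i\<le>m. y i k * zcoef y m i k') = (if k = k' then 1 else 0)"
proof -
  have "(\<Sum>i\<le>m. Dmat y m k i * zcoef y m i k') = (if k = k' then 1 else 0)"
    using Zinv[of m] assms unfolding is_inv_on_def by (auto simp: atLeast0AtMost)
  moreover have "(\<Sum>i\<le>m. Dmat y m k i * zcoef y m i k') = (\<Sum>i\<le>m. y i k * zcoef y m i k')"
    using assms by (intro sum.cong) (auto simp: Dmat_def)
  ultimately show ?thesis by simp
qed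

lemma Z0: "m < i \<or> m < k \<Longrightarrow> zcoef y m i k = 0"
  using Zinv[of m] unfolding is_inv_on_def by auto



lemma Pinv: "is_inv_on ({0..m}-{m}) ({0..m}-{m}) (Dmat y m) (inv_on ({0..m}-{m}) ({0..m}-{m}) (Dmat y m))"
proof (cases m)
  case 0
  have "is_inv_on ({0..m}-{m}) ({0..m}-{m}) (Dmat y m) (\<lambda>_ _. 0)"
    using 0 unfolding is_inv_on_def by auto
  then show ?thesis by (rule inv_on_is[rotated 2]) auto
next
  case (Suc m')
  have S: "{0..m}-{m} = {0..m'}" using Suc by auto
  have "is_inv_on {0..m'} {0..m'} (Dmat y m) (zcoef y m')"
    using Zinv[of m'] by (subst is_inv_cong[where M'="Dmat y m'"]) (auto simp: Dmat_def Suc)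
  then show ?thesis unfolding S by (rule inv_on_is[rotated 2]) auto
qed

lemma Zqd: "zcoef y m m m * quasidet m (Dmat y m) m m = 1"
proof -
  define P where "P = inv_on ({0..m}-{m}) ({0..m}-{m}) (Dmat y m)"
  define Z where "Z = zcoef y m"
  have S: "{0..m}-{m} = {..<m}" by auto
  have h3: "(\<Sum>a'<m. y a' k * P a' b') = (if k = b' then 1 else 0)" if "k < m" "b' < m" for k b'
  proof -
    have PP: "is_inv_on {..<m} {..<m} (Dmat y m) P" using Pinv[of m] unfolding P_def S .
    have "(\<Sum>a'<m. Dmat y m k a' * P a' b') = (if k = b' then 1 else 0)"
      using PP that unfolding is_inv_on_def by auto
    moreover have "(\<Sum>a'<m. Dmat y m k a' * P a' b') = (\<Sum>a'<m. y a' k * P a' b')"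
      using that by (intro sum.cong) (auto simp: Dmat_def)
    ultimately show ?thesis by simp
  qed
  have h1: "(\<Sum>k<m. Z m k * y j k) + Z m m * y j m = (if m = j then 1 else 0)" if "j \<le> m" for j
    using ZL[of m m j] that unfolding Z_def split_last by simp
  have h2: "Z m m * y a' m = - (\<Sum>k<m. Z m k * y a' k)" if "a' < m" for a'
    using h1[of a'] that by (simp add: eq_neg_iff_add_eq_0 add.commute)
  have qd: "quasidet m (Dmat y m) m m = y m m - (\<Sum>a'<m. \<Sum>b'<m. y a' m * P a' b' * y m b')"
    unfolding quasidet_def P_def S by (auto simp: Dmat_def intro!: sum.cong)
  have "Z m m * quasidet m (Dmat y m) m m
      = Z m m * y m m - (\<Sum>a'<m. \<Sum>b'<m. (Z m m * y a' m) * P a' b' * y m b')"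
    unfolding qd by (simp add: right_diff_distrib sum_distrib_left mult.assoc)
  also have "\<dots> = Z m m * y m m + (\<Sum>a'<m. \<Sum>b'<m. \<Sum>k<m. Z m k * y a' k * P a' b' * y m b')"
    by (simp add: h2 sum_distrib_right sum_negf)
  also have "(\<Sum>a'<m. \<Sum>b'<m. \<Sum>k<m. Z m k * y a' k * P a' b' * y m b')
      = (\<Sum>k<m. \<Sum>b'<m. Z m k * (\<Sum>a'<m. y a' k * P a' b') * y m b')"
  proof -
    have "(\<Sum>a'<m. \<Sum>b'<m. \<Sum>k<m. Z m k * y a' k * P a' b' * y m b')
        = (\<Sum>a'<m. \<Sum>k<m. \<Sum>b'<m. Z m k * y a' k * P a' b' * y m b')"
      by (rule sum.cong[OF refl], rule sum.swap)
    also have "\<dots> = (\<Sum>k<m. \<Sum>a'<m. \<Sum>b'<m. Z m k * y a' k * P a' b' * y m b')"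
      by (rule sum.swap)
    also have "\<dots> = (\<Sum>k<m. \<Sum>b'<m. \<Sum>a'<m. Z m k * y a' k * P a' b' * y m b')"
      by (rule sum.cong[OF refl], rule sum.swap)
    also have "\<dots> = (\<Sum>k<m. \<Sum>b'<m. Z m k * (\<Sum>a'<m. y a' k * P a' b') * y m b')"
      by (simp add: sum_distrib_left sum_distrib_right mult.assoc)
    finally show ?thesis .
  qed
  also have "\<dots> = (\<Sum>k<m. \<Sum>b'<m. Z m k * (if k = b' then 1 else 0) * y m b')"
    by (intro sum.cong refl) (simp add: h3)
  also have "\<dots> = (\<Sum>k<m. Z m k * y m k)"
    by (intro sum.cong refl) (simp add: delta_l delta_r delta_m sum.delta sum.delta')
  finally show ?thesis using h1[of m] unfolding Z_def by (simp add: add.commute)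
qed

lemma qdZ: "quasidet m (Dmat y m) m m * zcoef y m m m = 1"
  by (rule one_sided_div[OF Zqd])

lemma recursion:
  assumes "i \<le> m" "k \<le> m"
  shows "zcoef y (Suc m) i k = zcoef y m i k
           + zcoef y (Suc m) i (Suc m) * quasidet (Suc m) (Dmat y (Suc m)) (Suc m) (Suc m) * zcoef y (Suc m) (Suc m) k"
proof -
  define Zs where "Zs = zcoef y (Suc m)"
  define Z where "Z = zcoef y m"
  define q where "q = quasidet (Suc m) (Dmat y (Suc m)) (Suc m) (Suc m)"
  have qs: "q * Zs (Suc m) (Suc m) = 1" unfolding q_def Zs_def by (rule qdZ)
  define W where "W i k = Zs i k - Zs i (Suc m) * q * Zs (Suc m) k" for i k
  have hW: "(\<Sum>k\<le>m. W i k * y j k) = (if i = j then 1 else 0)" if "i \<le> m" "j \<le> m" for i j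
  proof -
    have a: "(\<Sum>k\<le>m. Zs i k * y j k) + Zs i (Suc m) * y j (Suc m) = (if i = j then 1 else 0)"
      using ZL[of i "Suc m" j] that unfolding Zs_def by (simp add: atMost_Suc add.commute)
    have b: "(\<Sum>k\<le>m. Zs (Suc m) k * y j k) + Zs (Suc m) (Suc m) * y j (Suc m) = 0"
      using ZL[of "Suc m" "Suc m" j] that unfolding Zs_def by (simp add: atMost_Suc add.commute)
    have "(\<Sum>k\<le>m. W i k * y j k) = (\<Sum>k\<le>m. Zs i k * y j k) - Zs i (Suc m) * q * (\<Sum>k\<le>m. Zs (Suc m) k * y j k)"
      unfolding W_def by (simp add: left_diff_distrib sum_subtractf sum_distrib_left mult.assoc)
    also have "\<dots> = (if i = j then 1 else 0) - Zs i (Suc m) * y j (Suc m)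
                     + Zs i (Suc m) * (q * Zs (Suc m) (Suc m)) * y j (Suc m)"
    proof -
      have a': "(\<Sum>k\<le>m. Zs i k * y j k) = (if i = j then 1 else 0) - Zs i (Suc m) * y j (Suc m)"
        using a by (simp add: eq_diff_eq)
      have b': "(\<Sum>k\<le>m. Zs (Suc m) k * y j k) = - (Zs (Suc m) (Suc m) * y j (Suc m))"
        using b by (simp add: eq_neg_iff_add_eq_0)
      show ?thesis unfolding a' b' by (simp add: mult.assoc)
    qed
    also have "\<dots> = (if i = j then 1 else 0)" using qs by simp
    finally show ?thesis .
  qed
  have "Z i k = (\<Sum>j\<le>m. (if i = j then 1 else 0) * Z j k)"
    using assms by (simp add: delta_l delta_r delta_m sum.delta sum.delta')
  also have "\<dots> = (\<Sum>j\<le>m. (\<Sum>k'\<le>m. W i k' * y j k') * Z j k)"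
    using assms by (intro sum.cong refl) (simp add: hW)
  also have "\<dots> = (\<Sum>k'\<le>m. W i k' * (\<Sum>j\<le>m. y j k' * Z j k))"
    apply (simp add: sum_distrib_left sum_distrib_right mult.assoc)
    apply (rule sum.swap)
    done
  also have "\<dots> = (\<Sum>k'\<le>m. W i k' * (if k' = k then 1 else 0))"
    using assms unfolding Z_def by (intro sum.cong refl) (simp add: ZR)
  also have "\<dots> = W i k" using assms by (simp add: delta_l delta_r delta_m sum.delta sum.delta')
  finally show ?thesis unfolding W_def Z_def Zs_def q_def by simp
qed

lemma expansion:
  "zcoef y n i k = (\<Sum>m\<le>n. zcoef y m i m * quasidet m (Dmat y m) m m * zcoef y m m k)"
proof (induction n arbitrary: i k)
  case 0
  show ?case
  proof (cases "i = 0 \<and> k = 0")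
    case True
    then show ?thesis using qdZ[of 0] by (simp add: mult.assoc)
  next
    case False
    then show ?thesis using Z0[of 0 i k] Z0[of 0 i 0] Z0[of 0 0 k] by auto
  qed
next
  case (Suc m)
  define u where "u = zcoef y (Suc m) i (Suc m)"
  define w where "w = zcoef y (Suc m) (Suc m) k"
  define q where "q = quasidet (Suc m) (Dmat y (Suc m)) (Suc m) (Suc m)"
  have key: "zcoef y (Suc m) i k = zcoef y m i k + u * q * w"
  proof -
    consider "i \<le> m \<and> k \<le> m" | "Suc m < i \<or> Suc m < k" | "i = Suc m" "k \<le> Suc m" | "k = Suc m" "i \<le> m"
      by linarith
    then show ?thesis
    proof cases
      case 1 then show ?thesis unfolding u_def w_def q_def using recursion by blast
    next
      case 2 then show ?thesis unfolding u_def w_def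
        using Z0[of "Suc m" i k] Z0[of m i k] Z0[of "Suc m" i "Suc m"] Z0[of "Suc m" "Suc m" k] by auto
    next
      case 3 then show ?thesis unfolding u_def w_def q_def
        using Z0[of m i k] Zqd[of "Suc m"] by (simp add: mult.assoc)
    next
      case 4 then show ?thesis unfolding u_def w_def q_def
        using Z0[of m i k] qdZ[of "Suc m"] by (simp add: mult.assoc)
    qed
  qed
  show ?case unfolding key Suc.IH[of i k] u_def w_def q_def by (simp add: atMost_Suc add.commute)
qed

end

context
  fixes smL :: "'k::division_ring \<Rightarrow> 'v::ab_group_add \<Rightarrow> 'v"
    and smR :: "'w::ab_group_add \<Rightarrow> 'k \<Rightarrow> 'w"
    and pr :: "'v \<Rightarrow> 'w \<Rightarrow> 'k"
  assumes LM: "left_module smL" and RM: "right_module smR" and PR: "pairing smL smR pr"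
begin

lemma pr_addl: "pr (x + x') g = pr x g + pr x' g" using PR unfolding pairing_def by blast
lemma pr_addr: "pr x (g + g') = pr x g + pr x g'" using PR unfolding pairing_def by blast

lemma pr_zerol: "pr 0 g = 0"
  using pr_addl[of 0 0 g] by simp
lemma pr_zeror: "pr x 0 = 0"
  using pr_addr[of x 0 0] by simp

lemma pr_suml: "pr (\<Sum>x\<in>A. X x) g = (\<Sum>x\<in>A. pr (X x) g)"
  by (induction A rule: infinite_finite_induct) (auto simp: pr_zerol pr_addl)
lemma pr_sumr: "pr x (\<Sum>i\<in>A. G i) = (\<Sum>i\<in>A. pr x (G i))"
  by (induction A rule: infinite_finite_induct) (auto simp: pr_zeror pr_addr)

lemma pr_smL: "pr (smL l x) g = l * pr x g"
proof -
  have "smR g 1 = g" using RM unfolding right_module_def by blast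
  then show ?thesis using PR unfolding pairing_def by (metis mult.right_neutral)
qed

lemma pr_smR: "pr x (smR g m) = pr x g * m"
proof -
  have "smL 1 x = x" using LM unfolding left_module_def by blast
  then show ?thesis using PR unfolding pairing_def by (metis mult_1_left)
qed

lemma pr_w: "pr (wvec smL v c m) h = (\<Sum>k\<le>m. c k m * pr (v k) h)"
  unfolding wvec_def by (simp add: pr_suml pr_smL)

lemma pr_q: "pr x (qvec smR p a m) = (\<Sum>i\<le>m. pr x (p i) * a i m)"
  unfolding qvec_def by (simp add: pr_sumr pr_smR)

end


theorem theorem7:
  fixes smL :: "'k::division_ring \<Rightarrow> 'v::ab_group_add \<Rightarrow> 'v"
    and smR :: "'w::ab_group_add \<Rightarrow> 'k \<Rightarrow> 'w"
    and pr :: "'v \<Rightarrow> 'w \<Rightarrow> 'k"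
    and v :: "nat \<Rightarrow> 'v" and p :: "nat \<Rightarrow> 'w"
    and a c :: "nat \<Rightarrow> nat \<Rightarrow> 'k"
    and f :: 'v and g :: 'w and n :: nat
  assumes "left_module smL" and "right_module smR" and "pairing smL smR pr"
    and gen: "generic (\<lambda>i k. pr (v k) (p i))"
    and A_upper: "\<forall>i m. m < i \<longrightarrow> a i m = 0"
    and C_lower: "\<forall>k m. m < k \<longrightarrow> c k m = 0"
    and biorth: "\<forall>m m'. m \<noteq> m' \<longrightarrow> pr (wvec smL v c m) (qvec smR p a m') = 0"
    and norm_w: "\<forall>m. pr (wvec smL v c m) (p m) = 1"
    and norm_q: "\<forall>m. pr (v m) (qvec smR p a m) = 1"
  shows "pr f g = (\<Sum>m\<le>n. DeltaR pr p a m f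
                       * quasidet m (Dmat (\<lambda>i k. pr (v k) (p i)) m) m m
                       * DeltaL pr v c m g)
                  + remainder pr v p n f g
         \<and> (\<forall>f' i. i \<le> n \<longrightarrow> remainder pr v p n f' (p i) = 0)
         \<and> (\<forall>g' k. k \<le> n \<longrightarrow> remainder pr v p n (v k) g' = 0)"
proof -
  note M = assms(1-3)
  define y where "y = (\<lambda>i k. pr (v k) (p i))"
  have gy: "generic y" using gen unfolding y_def .
  define Z where "Z = zcoef y"
  define qd where "qd m = quasidet m (Dmat y m) m m" for m
  have Zqd': "Z m m m * qd m = 1" for m unfolding Z_def qd_def by (rule Zqd[OF gy])
  have Znz: "Z m m m \<noteq> 0" for m using Zqd'[of m] by auto
  have rem: "remainder pr v p n f' g' =
      pr f' g' - (\<Sum>i\<le>n. \<Sum>k\<le>n. pr f' (p i) * Z n i k * pr (v k) g')" for f' g'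
    unfolding remainder_def Z_def y_def ..
  have AC: "(\<forall>i. a i m = Z m i m) \<and> (\<forall>k. c k m = Z m m k)" for m
  proof (induction m rule: less_induct)
    case (less m)
    have ajj: "a j j \<noteq> 0" if "j < m" for j using less[OF that] Znz by simp
    have cjj: "c j j \<noteq> 0" if "j < m" for j using less[OF that] Znz by simp
    have rz: "pr (wvec smL v c m) (p j) = 0" if "j < m" for j
      using that
    proof (induction j rule: less_induct)
      case (less j)
      have "0 = pr (wvec smL v c m) (qvec smR p a j)" using biorth less.prems by auto
      also have "\<dots> = (\<Sum>i\<le>j. pr (wvec smL v c m) (p i) * a i j)" by (rule pr_q[OF M])
      also have "\<dots> = (\<Sum>i<j. pr (wvec smL v c m) (p i) * a i j) + pr (wvec smL v c m) (p j) * a j j"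
        by (rule split_last)
      also have "(\<Sum>i<j. pr (wvec smL v c m) (p i) * a i j) = 0"
        using less by (intro sum.neutral) auto
      finally have "pr (wvec smL v c m) (p j) * a j j = 0" by simp
      then show ?case using ajj[OF less.prems] by simp
    qed
    have rd: "(\<Sum>k\<le>m. c k m * y j k) = (if m = j then 1 else 0)" if "j \<le> m" for j
    proof -
      have "(\<Sum>k\<le>m. c k m * y j k) = pr (wvec smL v c m) (p j)"
        unfolding pr_w[OF M] y_def ..
      then show ?thesis using rz[of j] norm_w that by (cases "j = m") auto
    qed
    have sz: "pr (v k) (qvec smR p a m) = 0" if "k < m" for k
      using that
    proof (induction k rule: less_induct)
      case (less k)
      have "0 = pr (wvec smL v c k) (qvec smR p a m)" using biorth less.prems by auto
      also have "\<dots> = (\<Sum>k'\<le>k. c k' k * pr (v k') (qvec smR p a m))" by (rule pr_w[OF M])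
      also have "\<dots> = (\<Sum>k'<k. c k' k * pr (v k') (qvec smR p a m)) + c k k * pr (v k) (qvec smR p a m)"
        by (rule split_last)
      also have "(\<Sum>k'<k. c k' k * pr (v k') (qvec smR p a m)) = 0"
        using less by (intro sum.neutral) auto
      finally have "c k k * pr (v k) (qvec smR p a m) = 0" by simp
      then show ?case using cjj[OF less.prems] by simp
    qed
    have sd: "(\<Sum>i\<le>m. y i k * a i m) = (if k = m then 1 else 0)" if "k \<le> m" for k
    proof -
      have "(\<Sum>i\<le>m. y i k * a i m) = pr (v k) (qvec smR p a m)"
        unfolding pr_q[OF M] y_def ..
      then show ?thesis using sz[of k] norm_q that by (cases "k = m") auto
    qed
    have cm: "c k m = Z m m k" for k
    proof (cases "k \<le> m")
      case True
      have "Z m m k = (\<Sum>j\<le>m. (if m = j then 1 else 0) * Z m j k)"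
        by (simp add: delta_l delta_r delta_m sum.delta sum.delta')
      also have "\<dots> = (\<Sum>j\<le>m. (\<Sum>k'\<le>m. c k' m * y j k') * Z m j k)"
        by (intro sum.cong refl) (simp add: rd)
      also have "\<dots> = (\<Sum>k'\<le>m. c k' m * (\<Sum>j\<le>m. y j k' * Z m j k))"
        apply (simp add: sum_distrib_left sum_distrib_right mult.assoc)
        apply (rule sum.swap)
        done
      also have "\<dots> = (\<Sum>k'\<le>m. c k' m * (if k' = k then 1 else 0))"
        using True unfolding Z_def by (intro sum.cong refl) (simp add: ZR[OF gy])
      also have "\<dots> = c k m" using True by (simp add: delta_l delta_r delta_m sum.delta sum.delta')
      finally show ?thesis by simp
    next
      case False
      then show ?thesis using C_lower Z0[OF gy, of m m k] unfolding Z_def by auto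
    qed
    have am: "a i m = Z m i m" for i
    proof (cases "i \<le> m")
      case True
      have "Z m i m = (\<Sum>k\<le>m. Z m i k * (if k = m then 1 else 0))"
        by (simp add: delta_l delta_r delta_m sum.delta sum.delta')
      also have "\<dots> = (\<Sum>k\<le>m. Z m i k * (\<Sum>i'\<le>m. y i' k * a i' m))"
        by (intro sum.cong refl) (simp add: sd)
      also have "\<dots> = (\<Sum>i'\<le>m. (\<Sum>k\<le>m. Z m i k * y i' k) * a i' m)"
        apply (simp add: sum_distrib_left sum_distrib_right mult.assoc)
        apply (rule sum.swap)
        done
      also have "\<dots> = (\<Sum>i'\<le>m. (if i = i' then 1 else 0) * a i' m)"
        using True unfolding Z_def by (intro sum.cong refl) (simp add: ZL[OF gy])
      also have "\<dots> = a i m" using True by (simp add: delta_l delta_r delta_m sum.delta sum.delta')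
      finally show ?thesis by simp
    next
      case False
      then show ?thesis using A_upper Z0[OF gy, of m i m] unfolding Z_def by auto
    qed
    show ?case using am cm by blast
  qed
  define F where "F i = pr f (p i)" for i
  define G where "G k = pr (v k) g" for k
  have DR: "DeltaR pr p a m f = (\<Sum>i\<le>n. F i * Z m i m)" if "m \<le> n" for m
  proof -
    have "DeltaR pr p a m f = (\<Sum>i\<le>m. F i * Z m i m)"
      unfolding DeltaR_def F_def using AC by simp
    also have "\<dots> = (\<Sum>i\<le>n. F i * Z m i m)"
      using that by (intro sum.mono_neutral_left) (auto simp: Z_def Z0[OF gy])
    finally show ?thesis .
  qed
  have DL: "DeltaL pr v c m g = (\<Sum>k\<le>n. Z m m k * G k)" if "m \<le> n" for m
  proof -
    have "DeltaL pr v c m g = (\<Sum>k\<le>m. Z m m k * G k)"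
      unfolding DeltaL_def G_def using AC by simp
    also have "\<dots> = (\<Sum>k\<le>n. Z m m k * G k)"
      using that by (intro sum.mono_neutral_left) (auto simp: Z_def Z0[OF gy])
    finally show ?thesis .
  qed
  have main: "(\<Sum>m\<le>n. DeltaR pr p a m f * qd m * DeltaL pr v c m g)
      = (\<Sum>i\<le>n. \<Sum>k\<le>n. F i * Z n i k * G k)"
  proof -
    have "(\<Sum>m\<le>n. DeltaR pr p a m f * qd m * DeltaL pr v c m g)
        = (\<Sum>m\<le>n. (\<Sum>i\<le>n. F i * Z m i m) * qd m * (\<Sum>k\<le>n. Z m m k * G k))"
      by (intro sum.cong refl) (simp add: DR DL)
    also have "\<dots> = (\<Sum>m\<le>n. \<Sum>i\<le>n. \<Sum>k\<le>n. F i * (Z m i m * qd m * Z m m k) * G k)"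
      apply (simp add: sum_distrib_left sum_distrib_right mult.assoc)
      apply (rule sum.cong[OF refl])
      apply (rule sum.swap)
      done
    also have "\<dots> = (\<Sum>i\<le>n. \<Sum>m\<le>n. \<Sum>k\<le>n. F i * (Z m i m * qd m * Z m m k) * G k)"
      by (rule sum.swap)
    also have "\<dots> = (\<Sum>i\<le>n. \<Sum>k\<le>n. \<Sum>m\<le>n. F i * (Z m i m * qd m * Z m m k) * G k)"
      by (rule sum.cong[OF refl], rule sum.swap)
    also have "\<dots> = (\<Sum>i\<le>n. \<Sum>k\<le>n. F i * (\<Sum>m\<le>n. Z m i m * qd m * Z m m k) * G k)"
      by (simp add: sum_distrib_left sum_distrib_right)
    also have "\<dots> = (\<Sum>i\<le>n. \<Sum>k\<le>n. F i * Z n i k * G k)"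
      unfolding Z_def qd_def by (simp only: expansion[OF gy, of n, symmetric])
    finally show ?thesis .
  qed
  have part1: "pr f g = (\<Sum>m\<le>n. DeltaR pr p a m f * qd m * DeltaL pr v c m g) + remainder pr v p n f g"
    unfolding main rem F_def G_def by simp
  have part2: "remainder pr v p n f' (p j) = 0" if "j \<le> n" for f' j
  proof -
    have "(\<Sum>i\<le>n. \<Sum>k\<le>n. pr f' (p i) * Z n i k * pr (v k) (p j))
        = (\<Sum>i\<le>n. pr f' (p i) * (\<Sum>k\<le>n. Z n i k * y j k))"
      unfolding y_def by (simp add: sum_distrib_left mult.assoc)
    also have "\<dots> = (\<Sum>i\<le>n. pr f' (p i) * (if i = j then 1 else 0))"
      using that unfolding Z_def by (intro sum.cong refl) (simp add: ZL[OF gy])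
    also have "\<dots> = pr f' (p j)" using that by (simp add: delta_l delta_r delta_m sum.delta sum.delta')
    finally show ?thesis unfolding rem by simp
  qed
  have part3: "remainder pr v p n (v j) g' = 0" if "j \<le> n" for g' j
  proof -
    have "(\<Sum>i\<le>n. \<Sum>k\<le>n. pr (v j) (p i) * Z n i k * pr (v k) g')
        = (\<Sum>k\<le>n. (\<Sum>i\<le>n. y i j * Z n i k) * pr (v k) g')"
      unfolding y_def by (simp add: sum_distrib_right) (rule sum.swap)
    also have "\<dots> = (\<Sum>k\<le>n. (if j = k then 1 else 0) * pr (v k) g')"
      using that unfolding Z_def by (intro sum.cong refl) (simp add: ZR[OF gy])
    also have "\<dots> = pr (v j) g'" using that by (simp add: delta_l delta_r delta_m sum.delta sum.delta')
    finally show ?thesis unfolding rem by simp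
  qed
  show ?thesis using part1 part2 part3 unfolding qd_def y_def by blast
qed

end
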